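(* Let $n,b$ be integers with $1<n<b$, let $p=(d_k,\ldots,d_0)_b=n\cdot(d_{\sigma(k)},\ldots,d_{\sigma(0)})_b$ be an $(n,b,\sigma)$-permutiple with carries $c_0=0,c_1,\ldots,c_k$, let $S=\bigl((c_0,c_1),(c_1,c_2),\ldots,(c_{k-1},c_k),(c_k,c_0)\bigr)$ be its state-transition sequence, and let $s=(d_0,d_{\sigma(0)})(d_1,d_{\sigma(1)})\cdots(d_k,d_{\sigma(k)})$ be its permutiple string. If $\varphi$ is a symmetry of $p$, then the state-transition sequence of the permutiple string $$s_\varphi=(d_{\varphi(0)},d_{\sigma\varphi(0)})(d_{\varphi(1)},d_{\sigma\varphi(1)})\cdots(d_{\varphi(k)},d_{\sigma\varphi(k)})$$ is $S_\varphi=\bigl((c_{\varphi(0)},c_{\varphi(1)}),(c_{\varphi(1)},c_{\varphi(2)}),\ldots,(c_{\varphi(k-1)},c_{\varphi(k)}),(c_{\varphi(k)},c_{\varphi(0)})\bigr)$.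
   Context: For digits $0\le e_i<b$, $(e_k,\ldots,e_0)_b=\sum_i e_ib^i$ (leading zero digits allowed). For a permutation $\tau$ of $\{0,\ldots,k\}$, $(e_k,\ldots,e_0)_b$ is an $(n,b,\tau)$-permutiple if $(e_k,\ldots,e_0)_b=n\cdot(e_{\tau(k)},\ldots,e_{\tau(0)})_b$. Its carries are $c'_0=0$, $c'_{i+1}=\lfloor (ne_{\tau(i)}+c'_i)/b\rfloor$ for $0\le i\le k$ (one has $c'_{k+1}=0$, and $c'_i\le n-1$). Its permutiple string is the word $(e_0,e_{\tau(0)})(e_1,e_{\tau(1)})\cdots(e_k,e_{\tau(k)})$ of ordered digit pairs, and the state-transition sequence of this string is $\bigl((c'_0,c'_1),\ldots,(c'_{k-1},c'_k),(c'_k,c'_{k+1})\bigr)$, where $c'_{k+1}=0=c'_0$: the $i$-th input $(e_i,e_{\tau(i)})$ induces the transition from carry $c'_i$ to carry $c'_{i+1}$ (these satisfy $n e_{\tau(i)}-e_i+c'_i=b c'_{i+1}$). A permutation $\varphi$ of $\{0,\ldots,k\}$ is a symmetry of $p$ if reordering the inputs of $s$ by $\varphi$ gives again a permutiple string, i.e. $(d_{\varphi(k)},\ldots,d_{\varphi(0)})_b=n\cdot(d_{\sigma\varphi(k)},\ldots,d_{\sigma\varphi(0)})_b$, so that $s_\varphi$ is the permutiple string of this $(n,b,\varphi^{-1}\sigma\varphi)$-permutiple. *)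

theory Defs
  imports "HOL-Combinatorics.Permutations"
begin

definition digval :: "nat \<Rightarrow> nat \<Rightarrow> (nat \<Rightarrow> nat) \<Rightarrow> nat" where
  "digval b k e = (\<Sum>i\<le>k. e i * b ^ i)"

definition is_permutiple :: "nat \<Rightarrow> nat \<Rightarrow> nat \<Rightarrow> (nat \<Rightarrow> nat) \<Rightarrow> (nat \<Rightarrow> nat) \<Rightarrow> bool" where
  "is_permutiple n b k \<tau> e \<longleftrightarrow>
     (\<forall>i\<le>k. e i < b) \<and> \<tau> permutes {..k} \<and> digval b k e = n * digval b k (e \<circ> \<tau>)"

fun perm_carry :: "nat \<Rightarrow> nat \<Rightarrow> (nat \<Rightarrow> nat) \<Rightarrow> (nat \<Rightarrow> nat) \<Rightarrow> nat \<Rightarrow> nat" where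
  "perm_carry n b \<tau> e 0 = 0"
| "perm_carry n b \<tau> e (Suc i) = (n * e (\<tau> i) + perm_carry n b \<tau> e i) div b"

definition permutiple_string :: "nat \<Rightarrow> (nat \<Rightarrow> nat) \<Rightarrow> (nat \<Rightarrow> nat) \<Rightarrow> (nat \<times> nat) list" where
  "permutiple_string k \<tau> e = map (\<lambda>i. (e i, e (\<tau> i))) [0..<Suc k]"

fun word_carry :: "nat \<Rightarrow> nat \<Rightarrow> (nat \<times> nat) list \<Rightarrow> nat \<Rightarrow> nat" where
  "word_carry n b w 0 = 0"
| "word_carry n b w (Suc i) = (n * snd (w ! i) + word_carry n b w i) div b"

definition state_transitions :: "nat \<Rightarrow> nat \<Rightarrow> (nat \<times> nat) list \<Rightarrow> (nat \<times> nat) list" where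
  "state_transitions n b w =
     map (\<lambda>i. (word_carry n b w i, word_carry n b w (Suc i))) [0..<length w]"

definition is_symmetry :: "nat \<Rightarrow> nat \<Rightarrow> nat \<Rightarrow> (nat \<Rightarrow> nat) \<Rightarrow> (nat \<Rightarrow> nat) \<Rightarrow> (nat \<Rightarrow> nat) \<Rightarrow> bool" where
  "is_symmetry n b k \<sigma> d \<phi> \<longleftrightarrow>
     \<phi> permutes {..k} \<and> digval b k (d \<circ> \<phi>) = n * digval b k (d \<circ> \<sigma> \<circ> \<phi>)"

end

theory Submission
  imports Defs
begin

fun carry :: "nat \<Rightarrow> nat \<Rightarrow> (nat \<Rightarrow> nat) \<Rightarrow> nat \<Rightarrow> nat" where
  "carry n b y 0 = 0"
| "carry n b y (Suc i) = (n * y i + carry n b y i) div b"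

lemma carry_bound:
  assumes "n < b" "0 < n" "\<forall>i<m. y i < b"
  shows "carry n b y m < n"
  using assms
proof (induction m)
  case 0 then show ?case by simp
next
  case (Suc m)
  then have c: "carry n b y m \<le> n - 1" and y: "y m \<le> b - 1" by auto
  have "n * y m + carry n b y m \<le> n * (b - 1) + (n - 1)"
    using c y by (intro add_mono mult_le_mono2) auto
  also have "\<dots> < n * b" using Suc.prems by (cases n; cases b) (auto simp: algebra_simps)
  finally have "(n * y m + carry n b y m) div b < n"
    by (simp add: less_mult_imp_div_less mult.commute)
  then show ?case by simp
qed

lemma aux: "(A + b * B) * b ^ m = A * b ^ m + B * (b::nat) ^ Suc m"
  by (simp add: algebra_simps)

lemma L1: "n * (\<Sum>i<m. y i * b ^ i) =
   (\<Sum>i<m. ((n * y i + carry n b y i) mod b) * b ^ i) + carry n b y m * b ^ m"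
proof (induction m)
  case 0 then show ?case by simp
next
  case (Suc m)
  have e: "n * y m + carry n b y m = (n * y m + carry n b y m) mod b + b * carry n b y (Suc m)"
    by simp
  have "n * (\<Sum>i<Suc m. y i * b ^ i) = n * (\<Sum>i<m. y i * b ^ i) + (n * y m) * b ^ m"
    by (simp add: algebra_simps)
  also have "\<dots> = (\<Sum>i<m. ((n * y i + carry n b y i) mod b) * b ^ i)
      + (n * y m + carry n b y m) * b ^ m"
    using Suc.IH by (simp add: algebra_simps)
  also have "\<dots> = (\<Sum>i<m. ((n * y i + carry n b y i) mod b) * b ^ i)
      + ((n * y m + carry n b y m) mod b) * b ^ m + carry n b y (Suc m) * b ^ Suc m"
  proof -
    let ?q = "n * y m + carry n b y m"
    have "?q * b ^ m = (?q mod b + b * (?q div b)) * b ^ m" by (simp only: mod_mult_div_eq)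
    also have "\<dots> = (?q mod b) * b ^ m + (?q div b) * b ^ Suc m" by (rule aux)
    finally have "?q * b ^ m = (?q mod b) * b ^ m + (?q div b) * b ^ Suc m" .
    then show ?thesis by (simp only: carry.simps add.assoc)
  qed
  finally show ?case by simp
qed

lemma L3: "\<forall>i<m. x i < (b::nat) \<Longrightarrow> (\<Sum>i<m. x i * b ^ i) < b ^ m"
proof (induction m)
  case 0 then show ?case by simp
next
  case (Suc m)
  then have a: "(\<Sum>i<m. x i * b ^ i) < b ^ m" and xm: "x m \<le> b - 1" by auto
  have "(\<Sum>i<Suc m. x i * b ^ i) = (\<Sum>i<m. x i * b ^ i) + x m * b ^ m" by simp
  also have "\<dots> < b ^ m + (b - 1) * b ^ m" using a xm by (intro add_less_le_mono mult_le_mono1) auto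
  also have "\<dots> = b ^ Suc m" using Suc.prems by (cases b) (auto simp: algebra_simps)
  finally show ?case .
qed

lemma L2: "\<forall>i<m. x i < (b::nat) \<Longrightarrow> \<forall>i<m. r i < b \<Longrightarrow>
   (\<Sum>i<m. x i * b ^ i) = (\<Sum>i<m. r i * b ^ i) \<Longrightarrow> \<forall>i<m. x i = r i"
proof (induction m arbitrary: x r)
  case 0 then show ?case by simp
next
  case (Suc m)
  have sx: "(\<Sum>i<Suc m. x i * b ^ i) = x 0 + b * (\<Sum>i<m. x (Suc i) * b ^ i)"
    by (subst sum.lessThan_Suc_shift) (simp add: sum_distrib_left algebra_simps)
  have sr: "(\<Sum>i<Suc m. r i * b ^ i) = r 0 + b * (\<Sum>i<m. r (Suc i) * b ^ i)"
    by (subst sum.lessThan_Suc_shift) (simp add: sum_distrib_left algebra_simps)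
  have x0: "x 0 < b" "r 0 < b" using Suc.prems by auto
  have eq: "x 0 + b * (\<Sum>i<m. x (Suc i) * b ^ i) = r 0 + b * (\<Sum>i<m. r (Suc i) * b ^ i)"
    using Suc.prems(3) sx sr by simp
  from arg_cong[OF eq, of "\<lambda>t. t mod b"] x0 have h0: "x 0 = r 0" by simp
  from arg_cong[OF eq, of "\<lambda>t. t div b"] x0 have "(\<Sum>i<m. x (Suc i) * b ^ i) = (\<Sum>i<m. r (Suc i) * b ^ i)"
    by simp
  with Suc.IH[of "\<lambda>i. x (Suc i)" "\<lambda>i. r (Suc i)"] Suc.prems have "\<forall>i<m. x (Suc i) = r (Suc i)" by auto
  with h0 show ?case by (auto simp: less_Suc_eq_0_disj)
qed

lemma digits_lemma:
  assumes xb: "\<forall>i\<le>k. x i < b" and yb: "\<forall>i\<le>k. y i < (b::nat)"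
    and eq: "(\<Sum>i\<le>k. x i * b ^ i) = n * (\<Sum>i\<le>k. y i * b ^ i)"
  shows "(\<forall>i\<le>k. x i = (n * y i + carry n b y i) mod b) \<and> carry n b y (Suc k) = 0"
proof -
  have bp: "0 < b" using yb by auto
  let ?r = "\<lambda>i. (n * y i + carry n b y i) mod b"
  have e: "(\<Sum>i<Suc k. x i * b ^ i) = (\<Sum>i<Suc k. ?r i * b ^ i) + carry n b y (Suc k) * b ^ Suc k"
    using eq L1[where n=n and m="Suc k" and y=y and b=b] by (simp add: lessThan_Suc_atMost)
  have "(\<Sum>i<Suc k. x i * b ^ i) < b ^ Suc k" using xb by (intro L3) auto
  with e have "carry n b y (Suc k) * b ^ Suc k < b ^ Suc k" by linarith
  then have c0: "carry n b y (Suc k) = 0" by (cases "carry n b y (Suc k)") auto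
  with e have "(\<Sum>i<Suc k. x i * b ^ i) = (\<Sum>i<Suc k. ?r i * b ^ i)" by simp
  then have "\<forall>i<Suc k. x i = ?r i" using xb bp by (intro L2) auto
  with c0 show ?thesis by auto
qed

lemma carry_cong: "\<forall>j<i. f j = g j \<Longrightarrow> carry n b f i = carry n b g i"
  by (induction i) auto

lemma perm_carry_eq: "perm_carry n b \<sigma> d i = carry n b (d \<circ> \<sigma>) i"
  by (induction i) auto

lemma word_carry_eq: "i \<le> length w \<Longrightarrow> word_carry n b w i = carry n b (\<lambda>j. snd (w ! j)) i"
  by (induction i) auto

theorem corollary25:
  fixes n b k :: nat and \<sigma> \<phi> d :: "nat \<Rightarrow> nat"
  assumes "1 < n" and "n < b"
    and "is_permutiple n b k \<sigma> d"
    and "is_symmetry n b k \<sigma> d \<phi>"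
  shows "state_transitions n b (map (\<lambda>i. (d (\<phi> i), d (\<sigma> (\<phi> i)))) [0..<Suc k])
       = map (\<lambda>i. (perm_carry n b \<sigma> d (\<phi> i), perm_carry n b \<sigma> d (\<phi> ((i + 1) mod (k + 1)))))
             [0..<Suc k]"
proof -
  have db: "\<forall>i\<le>k. d i < b" and sp: "\<sigma> permutes {..k}"
    and peq: "digval b k d = n * digval b k (d \<circ> \<sigma>)"
    using assms(3) by (auto simp: is_permutiple_def)
  have fp: "\<phi> permutes {..k}" and feq: "digval b k (d \<circ> \<phi>) = n * digval b k (d \<circ> \<sigma> \<circ> \<phi>)"
    using assms(4) by (auto simp: is_symmetry_def)
  have sk: "\<And>i. i \<le> k \<Longrightarrow> \<sigma> i \<le> k" using sp by (metis atMost_iff permutes_in_image)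
  have fk: "\<And>i. i \<le> k \<Longrightarrow> \<phi> i \<le> k" using fp by (metis atMost_iff permutes_in_image)
  define y where "y = d \<circ> \<sigma>"
  define y' where "y' = d \<circ> \<sigma> \<circ> \<phi>"
  define c where "c = carry n b y"
  define c' where "c' = carry n b y'"
  have yb: "\<forall>i\<le>k. y i < b" using db sk by (simp add: y_def)
  have y'b: "\<forall>i\<le>k. y' i < b" using db sk fk by (simp add: y'_def)
  have D1: "(\<forall>i\<le>k. d i = (n * y i + c i) mod b) \<and> c (Suc k) = 0"
    unfolding c_def using db yb peq by (intro digits_lemma) (auto simp: digval_def y_def)
  have D2: "(\<forall>i\<le>k. (d \<circ> \<phi>) i = (n * y' i + c' i) mod b) \<and> c' (Suc k) = 0"
    unfolding c'_def using db fk y'b feq by (intro digits_lemma) (auto simp: digval_def y'_def)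
  have cb: "\<And>i. i \<le> Suc k \<Longrightarrow> c i < b" unfolding c_def
  proof -
    fix i assume "i \<le> Suc k"
    then have "\<forall>j<i. y j < b" using yb by auto
    then have "carry n b y i < n" using assms(1,2) by (intro carry_bound) auto
    then show "carry n b y i < b" using assms(2) by linarith
  qed
  have c'b: "\<And>i. i \<le> Suc k \<Longrightarrow> c' i < b" unfolding c'_def
  proof -
    fix i assume "i \<le> Suc k"
    then have "\<forall>j<i. y' j < b" using y'b by auto
    then have "carry n b y' i < n" using assms(1,2) by (intro carry_bound) auto
    then show "carry n b y' i < b" using assms(2) by linarith
  qed
  have key: "\<And>i. i \<le> k \<Longrightarrow> c' i = c (\<phi> i)"
  proof -
    fix i assume ik: "i \<le> k"
    let ?j = "\<phi> i"
    have jk: "?j \<le> k" using fk ik .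
    have yy: "y' i = y ?j" by (simp add: y_def y'_def)
    have a1: "n * y ?j + c ?j = d ?j + b * c (Suc ?j)"
      using D1 jk by (simp add: c_def)
    have a2: "n * y ?j + c' i = d ?j + b * c' (Suc i)"
      using D2 ik yy by (simp add: c'_def)
    from a1 a2 have "c' i + b * c (Suc ?j) = c ?j + b * c' (Suc i)" by linarith
    from arg_cong[OF this, of "\<lambda>t. t mod b"] cb[of ?j] c'b[of i] jk ik
    show "c' i = c ?j" by simp
  qed
  define w where "w = map (\<lambda>i. (d (\<phi> i), d (\<sigma> (\<phi> i)))) [0..<Suc k]"
  have lw: "length w = Suc k" by (simp add: w_def)
  have wc: "\<And>i. i \<le> Suc k \<Longrightarrow> word_carry n b w i = c' i"
  proof -
    fix i assume "i \<le> Suc k"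
    then have "word_carry n b w i = carry n b (\<lambda>j. snd (w ! j)) i"
      using lw by (intro word_carry_eq) simp
    also have "\<dots> = c' i" unfolding c'_def using \<open>i \<le> Suc k\<close>
      by (intro carry_cong) (auto simp: w_def y'_def simp del: upt_Suc)
    finally show "word_carry n b w i = c' i" .
  qed
  have pc: "\<And>i. perm_carry n b \<sigma> d i = c i" by (simp add: perm_carry_eq c_def y_def)
  have c0: "c (\<phi> 0) = 0" using key[of 0] by (simp add: c'_def)
  show ?thesis
    unfolding w_def[symmetric]
  proof (rule nth_equalityI)
    show "length (state_transitions n b w) = length (map (\<lambda>i. (perm_carry n b \<sigma> d (\<phi> i), perm_carry n b \<sigma> d (\<phi> ((i + 1) mod (k + 1))))) [0..<Suc k])"
      by (simp add: state_transitions_def lw)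
  next
    fix i assume "i < length (state_transitions n b w)"
    then have ik: "i \<le> k" by (simp add: state_transitions_def lw)
    have L: "state_transitions n b w ! i = (c' i, c' (Suc i))"
      using ik wc[of i] wc[of "Suc i"] by (simp add: state_transitions_def lw del: upt_Suc word_carry.simps)
    show "state_transitions n b w ! i = map (\<lambda>i. (perm_carry n b \<sigma> d (\<phi> i), perm_carry n b \<sigma> d (\<phi> ((i + 1) mod (k + 1))))) [0..<Suc k] ! i"
    proof (cases "i = k")
      case True
      then show ?thesis using L key[of k] D2 c0 pc by (simp del: upt_Suc)
    next
      case False
      then have "i + 1 \<le> k" using ik by simp
      then show ?thesis using L key[of i] key[of "i+1"] ik pc
        by (simp del: upt_Suc)
    qed
  qed
qed

end
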